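(* Let $G$ be a group and $L,R$ nonempty subsets of $G$. The two-sided group digraph $2\mathrm{S}(G;L,R)$ is strongly connected if and only if $G=\mathcal{W}(L^{-1})\mathcal{W}(R)=\mathcal{W}(L)\mathcal{W}(R^{-1})$ and there exist integers $i,j\ge 0$ such that $e=w_{L^{-1},i+1}\,w_{R,i}$ and $e=w_{L^{-1},j}\,w_{R,j+1}$ for some words $w_{L^{-1},i+1},w_{R,i},w_{L^{-1},j},w_{R,j+1}$ of the indicated lengths.
   Context: For nonempty subsets $L,R$ of a group $G$, the two-sided group digraph $2\mathrm{S}(G;L,R)$ has vertex set $G$ and a directed arc $(g,h)$ from $g$ to $h$ if and only if $h=l^{-1}gr$ for some $l\in L$, $r\in R$ (loops allowed; there are no multiple arcs). For a nonempty subset $S\subseteq G$, a word in $S$ of length $n$ is a product $s_1s_2\cdots s_n$ with all $s_i\in S$ (not necessarily distinct); $w_{S,n}$ denotes the group element given by some word in $S$ of length $n$, where a word of length $0$ is the identity $e$; different occurrences of $w_{S,n}$ may denote different words. $\mathcal{W}(S)$ is the set of elements of $G$ expressible as words in $S$ of positive finite length, and for subsets $A,B$, $AB=\{ab: a\in A,b\in B\}$. A digraph is strongly connected if for every pair of vertices $g,h$ there is a directed path from $g$ to $h$ and one from $h$ to $g$. *)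

theory Defs
  imports "HOL-Algebra.Algebra"
begin

definition two_sided_arcs :: "('a, 'b) monoid_scheme \<Rightarrow> 'a set \<Rightarrow> 'a set \<Rightarrow> ('a \<times> 'a) set" where
  "two_sided_arcs G L R =
     {(g, h). g \<in> carrier G \<and> h \<in> carrier G \<and>
        (\<exists>l\<in>L. \<exists>r\<in>R. h = inv\<^bsub>G\<^esub> l \<otimes>\<^bsub>G\<^esub> g \<otimes>\<^bsub>G\<^esub> r)}"

definition two_sided_strongly_connected :: "('a, 'b) monoid_scheme \<Rightarrow> 'a set \<Rightarrow> 'a set \<Rightarrow> bool" where
  "two_sided_strongly_connected G L R \<longleftrightarrow>
     (\<forall>g\<in>carrier G. \<forall>h\<in>carrier G. (g, h) \<in> (two_sided_arcs G L R)\<^sup>*)"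

fun words :: "('a, 'b) monoid_scheme \<Rightarrow> 'a set \<Rightarrow> nat \<Rightarrow> 'a set" where
  "words G S 0 = {\<one>\<^bsub>G\<^esub>}"
| "words G S (Suc n) = {s \<otimes>\<^bsub>G\<^esub> w | s w. s \<in> S \<and> w \<in> words G S n}"

definition Wd :: "('a, 'b) monoid_scheme \<Rightarrow> 'a set \<Rightarrow> 'a set" where
  "Wd G S = (\<Union>n\<in>{1..}. words G S n)"

end

theory Submission
  imports Defs
begin

context group
begin

lemma words_carrier: "S \<subseteq> carrier G \<Longrightarrow> words G S n \<subseteq> carrier G"
  by (induction n) auto

lemma words_one: "s \<in> S \<Longrightarrow> S \<subseteq> carrier G \<Longrightarrow> s \<in> words G S (Suc 0)"
proof -
  assume "s \<in> S" "S \<subseteq> carrier G"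
  then have "s = s \<otimes> \<one>" by auto
  then show ?thesis using \<open>s \<in> S\<close> by auto
qed

lemma words_mult: "S \<subseteq> carrier G \<Longrightarrow> a \<in> words G S m \<Longrightarrow> b \<in> words G S n
   \<Longrightarrow> a \<otimes> b \<in> words G S (m + n)"
proof (induction m arbitrary: a)
  case 0
  then have "b \<in> carrier G" using words_carrier by blast
  then show ?case using 0 by simp
next
  case (Suc m)
  then obtain s w where sw: "s \<in> S" "w \<in> words G S m" "a = s \<otimes> w" by auto
  have "w \<otimes> b \<in> words G S (m + n)" using Suc sw by auto
  moreover have "a \<otimes> b = s \<otimes> (w \<otimes> b)"
    using sw Suc.prems words_carrier by (simp only:) (blast intro!: m_assoc)
  ultimately show ?case using sw by auto
qed

lemma words_snoc: "S \<subseteq> carrier G \<Longrightarrow> w \<in> words G S n \<Longrightarrow> s \<in> S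
   \<Longrightarrow> w \<otimes> s \<in> words G S (Suc n)"
  using words_mult[of S w n s "Suc 0"] words_one by auto

lemma words_snoc_dec: "S \<subseteq> carrier G \<Longrightarrow> a \<in> words G S (Suc n) \<Longrightarrow>
   \<exists>w s. w \<in> words G S n \<and> s \<in> S \<and> a = w \<otimes> s"
proof (induction n arbitrary: a)
  case 0
  then obtain s where "s \<in> S" "a = s \<otimes> \<one>" by auto
  then show ?case using 0 by (intro exI[of _ \<one>] exI[of _ s]) auto
next
  case (Suc n)
  then obtain s w where sw: "s \<in> S" "w \<in> words G S (Suc n)" "a = s \<otimes> w" by auto
  then obtain w' t where wt: "w' \<in> words G S n" "t \<in> S" "w = w' \<otimes> t" using Suc by blast
  have c: "s \<in> carrier G" "w' \<in> carrier G" "t \<in> carrier G"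
    using sw wt Suc.prems words_carrier by blast+
  have "a = (s \<otimes> w') \<otimes> t" using sw(3) wt(3) c by (simp only: m_assoc)
  moreover have "s \<otimes> w' \<in> words G S (Suc n)" using sw wt by auto
  ultimately show ?case using wt by blast
qed

lemma words_inv: "S \<subseteq> carrier G \<Longrightarrow> T \<subseteq> carrier G \<Longrightarrow> (\<And>s. s \<in> S \<Longrightarrow> inv s \<in> T)
   \<Longrightarrow> a \<in> words G S n \<Longrightarrow> inv a \<in> words G T n"
proof (induction n arbitrary: a)
  case 0
  then show ?case by auto
next
  case (Suc n)
  then obtain s w where sw: "s \<in> S" "w \<in> words G S n" "a = s \<otimes> w" by auto
  have c: "s \<in> carrier G" "w \<in> carrier G" using sw Suc.prems words_carrier by blast+
  have "inv a = inv w \<otimes> inv s" using sw(3) c by (simp only: inv_mult_group)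
  then show ?case using Suc sw words_snoc by auto
qed

lemma set_inv_sub: "S \<subseteq> carrier G \<Longrightarrow> set_inv S \<subseteq> carrier G"
  unfolding SET_INV_def by auto

lemma Wd_carrier: "S \<subseteq> carrier G \<Longrightarrow> Wd G S \<subseteq> carrier G"
  unfolding Wd_def using words_carrier by blast

lemma reach_D:
  assumes "(g, h) \<in> (two_sided_arcs G L R)\<^sup>*" "g \<in> carrier G" "L \<subseteq> carrier G" "R \<subseteq> carrier G"
  shows "\<exists>n a b. a \<in> words G (set_inv L) n \<and> b \<in> words G R n \<and> h = a \<otimes> g \<otimes> b"
  using assms(1)
proof (induction rule: rtrancl_induct)
  case base
  then show ?case using assms by (intro exI[of _ 0]) auto
next
  case (step y z)
  then obtain n a b where ab: "a \<in> words G (set_inv L) n" "b \<in> words G R n" "y = a \<otimes> g \<otimes> b"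
    by blast
  from step obtain l r where lr: "l \<in> L" "r \<in> R" "z = inv l \<otimes> y \<otimes> r"
    unfolding two_sided_arcs_def by blast
  have c: "a \<in> carrier G" "b \<in> carrier G" "l \<in> carrier G" "r \<in> carrier G"
    using ab lr words_carrier set_inv_sub assms by blast+
  have "z = (inv l \<otimes> a) \<otimes> g \<otimes> (b \<otimes> r)" using c lr ab assms by (simp add: m_assoc)
  moreover have "inv l \<otimes> a \<in> words G (set_inv L) (Suc n)"
    using ab lr unfolding SET_INV_def by auto
  moreover have "b \<otimes> r \<in> words G R (Suc n)" using words_snoc ab lr assms by auto
  ultimately show ?case by blast
qed

lemma reach_I:
  assumes "L \<subseteq> carrier G" "R \<subseteq> carrier G"
  shows "a \<in> words G (set_inv L) n \<Longrightarrow> b \<in> words G R n \<Longrightarrow> g \<in> carrier G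
    \<Longrightarrow> (g, a \<otimes> g \<otimes> b) \<in> (two_sided_arcs G L R)\<^sup>*"
proof (induction n arbitrary: a b)
  case 0
  then show ?case by auto
next
  case (Suc n)
  then obtain s a' where sa: "s \<in> set_inv L" "a' \<in> words G (set_inv L) n" "a = s \<otimes> a'" by auto
  then obtain l where l: "l \<in> L" "s = inv l" unfolding SET_INV_def by auto
  obtain b' r where br: "b' \<in> words G R n" "r \<in> R" "b = b' \<otimes> r"
    using words_snoc_dec[OF assms(2) Suc.prems(2)] by blast
  have c: "a' \<in> carrier G" "b' \<in> carrier G" "l \<in> carrier G" "r \<in> carrier G"
    using sa br l words_carrier set_inv_sub assms by blast+
  have IH: "(g, a' \<otimes> g \<otimes> b') \<in> (two_sided_arcs G L R)\<^sup>*" using Suc sa br by blast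
  have eq: "a \<otimes> g \<otimes> b = inv l \<otimes> (a' \<otimes> g \<otimes> b') \<otimes> r"
    using c sa br l Suc.prems by (simp add: m_assoc)
  have "(a' \<otimes> g \<otimes> b', a \<otimes> g \<otimes> b) \<in> two_sided_arcs G L R"
    unfolding two_sided_arcs_def using c l br eq Suc.prems by auto
  then show ?case by (rule rtrancl_into_rtrancl[OF IH])
qed

lemma pad_inner:
  assumes L: "L \<subseteq> carrier G" and R: "R \<subseteq> carrier G"
    and al: "\<alpha> \<in> words G (set_inv L) (Suc i)" and be: "\<beta> \<in> words G R i" and ab: "\<one> = \<alpha> \<otimes> \<beta>"
    and ga: "\<gamma> \<in> words G (set_inv L) j" and de: "\<delta> \<in> words G R (Suc j)" and gd: "\<one> = \<gamma> \<otimes> \<delta>"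
  shows "\<forall>m k a b. (m + c = k \<or> k + c = m) \<longrightarrow> a \<in> words G (set_inv L) m \<longrightarrow> b \<in> words G R k \<longrightarrow>
    (\<exists>n a' b'. a' \<in> words G (set_inv L) n \<and> b' \<in> words G R n \<and> a' \<otimes> b' = a \<otimes> b)"
proof (induction c)
  case 0
  then show ?case by auto
next
  case (Suc c)
  have sL: "set_inv L \<subseteq> carrier G" using L by (rule set_inv_sub)
  have c: "\<alpha> \<in> carrier G" "\<beta> \<in> carrier G" "\<gamma> \<in> carrier G" "\<delta> \<in> carrier G"
    using al be ga de words_carrier sL R by blast+
  show ?case
  proof (intro allI impI)
    fix m k a b
    assume mk: "m + Suc c = k \<or> k + Suc c = m" and a: "a \<in> words G (set_inv L) m"
      and b: "b \<in> words G R k"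
    have ca: "a \<in> carrier G" "b \<in> carrier G" using a b words_carrier sL R by blast+
    show "\<exists>n a' b'. a' \<in> words G (set_inv L) n \<and> b' \<in> words G R n \<and> a' \<otimes> b' = a \<otimes> b"
    proof (cases "m + Suc c = k")
      case True
      have 1: "a \<otimes> \<alpha> \<in> words G (set_inv L) (m + Suc i)" using words_mult[OF sL a al] .
      have 2: "\<beta> \<otimes> b \<in> words G R (i + k)" using words_mult[OF R be b] .
      have "(a \<otimes> \<alpha>) \<otimes> (\<beta> \<otimes> b) = a \<otimes> ((\<alpha> \<otimes> \<beta>) \<otimes> b)" using c ca by (simp add: m_assoc)
      also have "\<dots> = a \<otimes> b" using ab[symmetric] ca by simp
      finally have 3: "(a \<otimes> \<alpha>) \<otimes> (\<beta> \<otimes> b) = a \<otimes> b" .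
      have "m + Suc i + c = i + k" using True by simp
      then obtain n a' b' where "a' \<in> words G (set_inv L) n" "b' \<in> words G R n"
        "a' \<otimes> b' = (a \<otimes> \<alpha>) \<otimes> (\<beta> \<otimes> b)" using Suc.IH 1 2 by blast
      then show ?thesis using 3 by metis
    next
      case False
      then have F: "k + Suc c = m" using mk by simp
      have 1: "a \<otimes> \<gamma> \<in> words G (set_inv L) (m + j)" using words_mult[OF sL a ga] .
      have 2: "\<delta> \<otimes> b \<in> words G R (Suc j + k)" using words_mult[OF R de b] .
      have "(a \<otimes> \<gamma>) \<otimes> (\<delta> \<otimes> b) = a \<otimes> ((\<gamma> \<otimes> \<delta>) \<otimes> b)" using c ca by (simp add: m_assoc)
      also have "\<dots> = a \<otimes> b" using gd[symmetric] ca by simp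
      finally have 3: "(a \<otimes> \<gamma>) \<otimes> (\<delta> \<otimes> b) = a \<otimes> b" .
      have "Suc j + k + c = m + j" using F by simp
      then obtain n a' b' where "a' \<in> words G (set_inv L) n" "b' \<in> words G R n"
        "a' \<otimes> b' = (a \<otimes> \<gamma>) \<otimes> (\<delta> \<otimes> b)" using Suc.IH 1 2 by blast
      then show ?thesis using 3 by metis
    qed
  qed
qed

lemma pad_outer:
  assumes L: "L \<subseteq> carrier G" and R: "R \<subseteq> carrier G"
    and al: "\<alpha> \<in> words G (set_inv L) (Suc i)" and be: "\<beta> \<in> words G R i" and ab: "\<one> = \<alpha> \<otimes> \<beta>"
    and ga: "\<gamma> \<in> words G (set_inv L) j" and de: "\<delta> \<in> words G R (Suc j)" and gd: "\<one> = \<gamma> \<otimes> \<delta>"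
    and x: "x \<in> carrier G"
  shows "\<forall>m k a b. (m + c = k \<or> k + c = m) \<longrightarrow> a \<in> words G (set_inv L) m \<longrightarrow> b \<in> words G R k \<longrightarrow>
    a \<otimes> x \<otimes> b = \<one> \<longrightarrow>
    (\<exists>n a' b'. a' \<in> words G (set_inv L) n \<and> b' \<in> words G R n \<and> a' \<otimes> x \<otimes> b' = \<one>)"
proof (induction c)
  case 0
  then show ?case by auto
next
  case (Suc c)
  have sL: "set_inv L \<subseteq> carrier G" using L by (rule set_inv_sub)
  have c: "\<alpha> \<in> carrier G" "\<beta> \<in> carrier G" "\<gamma> \<in> carrier G" "\<delta> \<in> carrier G"
    using al be ga de words_carrier sL R by blast+
  show ?case
  proof (intro allI impI)
    fix m k a b
    assume mk: "m + Suc c = k \<or> k + Suc c = m" and a: "a \<in> words G (set_inv L) m"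
      and b: "b \<in> words G R k" and e: "a \<otimes> x \<otimes> b = \<one>"
    have ca: "a \<in> carrier G" "b \<in> carrier G" using a b words_carrier sL R by blast+
    show "\<exists>n a' b'. a' \<in> words G (set_inv L) n \<and> b' \<in> words G R n \<and> a' \<otimes> x \<otimes> b' = \<one>"
    proof (cases "m + Suc c = k")
      case True
      have 1: "\<alpha> \<otimes> a \<in> words G (set_inv L) (Suc i + m)" using words_mult[OF sL al a] .
      have 2: "b \<otimes> \<beta> \<in> words G R (k + i)" using words_mult[OF R b be] .
      have "(\<alpha> \<otimes> a) \<otimes> x \<otimes> (b \<otimes> \<beta>) = \<alpha> \<otimes> (a \<otimes> x \<otimes> b) \<otimes> \<beta>" using c ca x by (simp add: m_assoc)
      also have "\<dots> = \<one>" using ab e c by simp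
      finally have 3: "(\<alpha> \<otimes> a) \<otimes> x \<otimes> (b \<otimes> \<beta>) = \<one>" .
      have "Suc i + m + c = k + i" using True by simp
      then show ?thesis using Suc.IH 1 2 3 by blast
    next
      case False
      then have F: "k + Suc c = m" using mk by simp
      have 1: "\<gamma> \<otimes> a \<in> words G (set_inv L) (j + m)" using words_mult[OF sL ga a] .
      have 2: "b \<otimes> \<delta> \<in> words G R (k + Suc j)" using words_mult[OF R b de] .
      have "(\<gamma> \<otimes> a) \<otimes> x \<otimes> (b \<otimes> \<delta>) = \<gamma> \<otimes> (a \<otimes> x \<otimes> b) \<otimes> \<delta>" using c ca x by (simp add: m_assoc)
      also have "\<dots> = \<one>" using gd e c by simp
      finally have 3: "(\<gamma> \<otimes> a) \<otimes> x \<otimes> (b \<otimes> \<delta>) = \<one>" .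
      have "k + Suc j + c = j + m" using F by simp
      then show ?thesis using Suc.IH 1 2 3 by blast
    qed
  qed
qed

end

theorem mainTheorem1:
  fixes G (structure) and L R :: "'a set"
  assumes "group G" and "L \<subseteq> carrier G" and "R \<subseteq> carrier G"
    and "L \<noteq> {}" and "R \<noteq> {}"
  shows "two_sided_strongly_connected G L R \<longleftrightarrow>
    (carrier G = Wd G (set_inv L) <#> Wd G R \<and>
     carrier G = Wd G L <#> Wd G (set_inv R) \<and>
     (\<exists>i::nat. \<exists>a\<in>words G (set_inv L) (i + 1). \<exists>b\<in>words G R i. \<one> = a \<otimes> b) \<and>
     (\<exists>j::nat. \<exists>a\<in>words G (set_inv L) j. \<exists>b\<in>words G R (j + 1). \<one> = a \<otimes> b))"
proof -
  interpret group G by fact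
  have L: "L \<subseteq> carrier G" and R: "R \<subseteq> carrier G" by fact+
  have sL: "set_inv L \<subseteq> carrier G" using L by (rule set_inv_sub)
  have sR: "set_inv R \<subseteq> carrier G" using R by (rule set_inv_sub)
  have invL: "\<And>s. s \<in> L \<Longrightarrow> inv s \<in> set_inv L" unfolding SET_INV_def by auto
  have invR: "\<And>s. s \<in> R \<Longrightarrow> inv s \<in> set_inv R" unfolding SET_INV_def by auto
  have invL': "\<And>s. s \<in> set_inv L \<Longrightarrow> inv s \<in> L" unfolding SET_INV_def using L by auto
  have invR': "\<And>s. s \<in> set_inv R \<Longrightarrow> inv s \<in> R" unfolding SET_INV_def using R by auto
  have WdI: "\<And>S x n. x \<in> words G S (Suc n) \<Longrightarrow> x \<in> Wd G S" unfolding Wd_def by force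
  have WdD: "\<And>S x. x \<in> Wd G S \<Longrightarrow> \<exists>n. x \<in> words G S n" unfolding Wd_def by blast
  have sub1: "Wd G (set_inv L) <#> Wd G R \<subseteq> carrier G"
    unfolding set_mult_def using Wd_carrier[OF sL] Wd_carrier[OF R] by blast
  have sub2: "Wd G L <#> Wd G (set_inv R) \<subseteq> carrier G"
    unfolding set_mult_def using Wd_carrier[OF L] Wd_carrier[OF sR] by blast
  show ?thesis
  proof
    assume SC: "two_sided_strongly_connected G L R"
    have reach: "\<And>g h. g \<in> carrier G \<Longrightarrow> h \<in> carrier G \<Longrightarrow>
      \<exists>n a b. a \<in> words G (set_inv L) n \<and> b \<in> words G R n \<and> h = a \<otimes> g \<otimes> b"
      using SC reach_D[OF _ _ L R] unfolding two_sided_strongly_connected_def by blast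
    obtain l r where l: "l \<in> L" and r: "r \<in> R" using assms by blast
    have cl: "l \<in> carrier G" and cr: "r \<in> carrier G" using l r L R by blast+
    have c1: "carrier G \<subseteq> Wd G (set_inv L) <#> Wd G R"
    proof
      fix x assume x: "x \<in> carrier G"
      obtain n a b where ab: "a \<in> words G (set_inv L) n" "b \<in> words G R n"
        "x = a \<otimes> (inv l \<otimes> r) \<otimes> b" using reach[of "inv l \<otimes> r" x] x cl cr by auto
      have ca: "a \<in> carrier G" "b \<in> carrier G" using ab words_carrier sL R by blast+
      have "x = (a \<otimes> inv l) \<otimes> (r \<otimes> b)" using ab ca cl cr by (simp add: m_assoc)
      moreover have "a \<otimes> inv l \<in> Wd G (set_inv L)" using WdI words_snoc[OF sL ab(1) invL[OF l]] by blast
      moreover have "r \<otimes> b \<in> Wd G R" using WdI[of "r \<otimes> b" R n] ab r by auto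
      ultimately show "x \<in> Wd G (set_inv L) <#> Wd G R" unfolding set_mult_def by blast
    qed
    have c2: "carrier G \<subseteq> Wd G L <#> Wd G (set_inv R)"
    proof
      fix x assume x: "x \<in> carrier G"
      obtain n a b where ab: "a \<in> words G (set_inv L) n" "b \<in> words G R n"
        "l \<otimes> inv r = a \<otimes> x \<otimes> b" using reach[of x "l \<otimes> inv r"] x cl cr by auto
      have ca: "a \<in> carrier G" "b \<in> carrier G" using ab words_carrier sL R by blast+
      have "(inv a \<otimes> l) \<otimes> (inv r \<otimes> inv b) = inv a \<otimes> (l \<otimes> inv r) \<otimes> inv b"
        using ca cl cr by (simp add: m_assoc)
      also have "\<dots> = inv a \<otimes> (a \<otimes> x \<otimes> b) \<otimes> inv b" using ab by simp
      also have "\<dots> = x" using ca x by (simp add: m_assoc flip: m_assoc[of "inv a" a x])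
      finally have "x = (inv a \<otimes> l) \<otimes> (inv r \<otimes> inv b)" by simp
      moreover have "inv a \<in> words G L n" using words_inv[OF sL L invL' ab(1)] .
      then have "inv a \<otimes> l \<in> Wd G L" using WdI words_snoc[OF L _ l] by blast
      moreover have "inv b \<in> words G (set_inv R) n" using words_inv[OF R sR invR ab(2)] .
      then have "inv r \<otimes> inv b \<in> Wd G (set_inv R)" using WdI[of "inv r \<otimes> inv b" "set_inv R" n] invR[OF r] by auto
      ultimately show "x \<in> Wd G L <#> Wd G (set_inv R)" unfolding set_mult_def by blast
    qed
    have c3: "\<exists>i::nat. \<exists>a\<in>words G (set_inv L) (i + 1). \<exists>b\<in>words G R i. \<one> = a \<otimes> b"
    proof -
      obtain n a b where ab: "a \<in> words G (set_inv L) n" "b \<in> words G R n"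
        "l = a \<otimes> \<one> \<otimes> b" using reach[of \<one> l] cl by auto
      have ca: "a \<in> carrier G" "b \<in> carrier G" using ab words_carrier sL R by blast+
      have "\<one> = inv l \<otimes> l" using cl by simp
      also have "\<dots> = (inv l \<otimes> a) \<otimes> b" using ab(3) ca cl by (simp add: m_assoc)
      finally have "\<one> = (inv l \<otimes> a) \<otimes> b" .
      moreover have "inv l \<otimes> a \<in> words G (set_inv L) (n + 1)" using ab invL[OF l] by auto
      ultimately show ?thesis using ab by blast
    qed
    have c4: "\<exists>j::nat. \<exists>a\<in>words G (set_inv L) j. \<exists>b\<in>words G R (j + 1). \<one> = a \<otimes> b"
    proof -
      obtain n a b where ab: "a \<in> words G (set_inv L) n" "b \<in> words G R n"
        "inv r = a \<otimes> \<one> \<otimes> b" using reach[of \<one> "inv r"] cr by auto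
      have ca: "a \<in> carrier G" "b \<in> carrier G" using ab words_carrier sL R by blast+
      have "\<one> = inv r \<otimes> r" using cr by simp
      also have "\<dots> = a \<otimes> (b \<otimes> r)" using ab(3) ca cr by (simp add: m_assoc)
      finally have "\<one> = a \<otimes> (b \<otimes> r)" .
      moreover have "b \<otimes> r \<in> words G R (n + 1)" using words_snoc[OF R ab(2) r] by simp
      ultimately show ?thesis using ab by blast
    qed
    show "carrier G = Wd G (set_inv L) <#> Wd G R \<and>
     carrier G = Wd G L <#> Wd G (set_inv R) \<and>
     (\<exists>i::nat. \<exists>a\<in>words G (set_inv L) (i + 1). \<exists>b\<in>words G R i. \<one> = a \<otimes> b) \<and>
     (\<exists>j::nat. \<exists>a\<in>words G (set_inv L) j. \<exists>b\<in>words G R (j + 1). \<one> = a \<otimes> b)"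
      using c1 c2 c3 c4 sub1 sub2 by blast
  next
    assume H: "carrier G = Wd G (set_inv L) <#> Wd G R \<and>
     carrier G = Wd G L <#> Wd G (set_inv R) \<and>
     (\<exists>i::nat. \<exists>a\<in>words G (set_inv L) (i + 1). \<exists>b\<in>words G R i. \<one> = a \<otimes> b) \<and>
     (\<exists>j::nat. \<exists>a\<in>words G (set_inv L) j. \<exists>b\<in>words G R (j + 1). \<one> = a \<otimes> b)"
    then obtain i \<alpha> \<beta> j \<gamma> \<delta> where
      al: "\<alpha> \<in> words G (set_inv L) (Suc i)" and be: "\<beta> \<in> words G R i" and ab: "\<one> = \<alpha> \<otimes> \<beta>"
      and ga: "\<gamma> \<in> words G (set_inv L) j" and de: "\<delta> \<in> words G R (Suc j)" and gd: "\<one> = \<gamma> \<otimes> \<delta>"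
      unfolding Suc_eq_plus1 by blast
    have H1: "carrier G = Wd G (set_inv L) <#> Wd G R" and H2: "carrier G = Wd G L <#> Wd G (set_inv R)"
      using H by auto
    show "two_sided_strongly_connected G L R"
      unfolding two_sided_strongly_connected_def
    proof (intro ballI)
      fix g h assume g: "g \<in> carrier G" and h: "h \<in> carrier G"
      have "g \<in> Wd G L <#> Wd G (set_inv R)" using g H2 by blast
      then obtain p q where pq: "p \<in> Wd G L" "q \<in> Wd G (set_inv R)" "g = p \<otimes> q"
        unfolding set_mult_def by blast
      obtain m k where mk: "p \<in> words G L m" "q \<in> words G (set_inv R) k" using pq WdD by blast
      have cpq: "p \<in> carrier G" "q \<in> carrier G" using mk words_carrier L sR by blast+
      have w1: "inv p \<in> words G (set_inv L) m" using words_inv[OF L sL invL mk(1)] .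
      have w2: "inv q \<in> words G R k" using words_inv[OF sR R invR' mk(2)] .
      have e1: "inv p \<otimes> g \<otimes> inv q = \<one>" using pq(3) cpq by (simp add: m_assoc)
      have mk': "m + (k - m) = k \<or> k + (m - k) = m" by auto
      then obtain n a b where nab: "a \<in> words G (set_inv L) n" "b \<in> words G R n" "a \<otimes> g \<otimes> b = \<one>"
      proof
        assume "m + (k - m) = k"
        then show ?thesis using pad_outer[OF L R al be ab ga de gd g, of "k - m"] w1 w2 e1 that by blast
      next
        assume "k + (m - k) = m"
        then show ?thesis using pad_outer[OF L R al be ab ga de gd g, of "m - k"] w1 w2 e1 that by blast
      qed
      have r1: "(g, \<one>) \<in> (two_sided_arcs G L R)\<^sup>*" using reach_I[OF L R nab(1,2) g] nab(3) by simp
      have "h \<in> Wd G (set_inv L) <#> Wd G R" using h H1 by blast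
      then obtain p' q' where pq': "p' \<in> Wd G (set_inv L)" "q' \<in> Wd G R" "h = p' \<otimes> q'"
        unfolding set_mult_def by blast
      obtain m' k' where mk2: "p' \<in> words G (set_inv L) m'" "q' \<in> words G R k'" using pq' WdD by blast
      have "m' + (k' - m') = k' \<or> k' + (m' - k') = m'" by auto
      then obtain n' a' b' where nab': "a' \<in> words G (set_inv L) n'" "b' \<in> words G R n'" "a' \<otimes> b' = h"
      proof
        assume "m' + (k' - m') = k'"
        then show ?thesis using pad_inner[OF L R al be ab ga de gd, of "k' - m'"] mk2 pq'(3) that by blast
      next
        assume "k' + (m' - k') = m'"
        then show ?thesis using pad_inner[OF L R al be ab ga de gd, of "m' - k'"] mk2 pq'(3) that by blast
      qed
      have ca': "a' \<in> carrier G" using nab' words_carrier sL by blast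
      have r2: "(\<one>, h) \<in> (two_sided_arcs G L R)\<^sup>*" using reach_I[OF L R nab'(1,2) one_closed] nab'(3) ca' by simp
      show "(g, h) \<in> (two_sided_arcs G L R)\<^sup>*" using r1 r2 by (rule rtrancl_trans)
    qed
  qed
qed

end
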